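(* Let $L\subseteq Q$ be a dense extension of Lie algebras with $Z(Q)=0$, and suppose that $A(Q)$ is right ideally absorbed into $A_0$. Then $Q$ is an algebra of quotients of $L$.
   Context: Lie algebras over a commutative unital ring $\Phi$. $\mathrm{ad}_x(y)=[x,y]$; $A(Q)$ is the associative subalgebra of $\mathrm{End}_\Phi(Q)$ generated by all $\mathrm{ad}_x$, $x\in Q$; $M(Q)$ is generated by the identity and all $\mathrm{ad}_x$. $A_0=\{\mu\in A(Q):\mu(L)\subseteq L\}$. $Z(Q)=\{a\in Q:[a,Q]=0\}$. An extension $L\subseteq Q$ is dense if the only $\mu\in M(Q)$ with $\mu(L)=0$ is $\mu=0$. For associative algebras $A\subseteq S$, $S$ is right ideally absorbed into $A$ if for every nonzero $q\in S$ there is a two-sided ideal $I$ of $A$ with $\mathrm{l.ann}_A(I)=\{a\in A:aI=0\}=0$ and $0\ne qI\subseteq A$. $Q$ is an algebra of quotients of $L$ if for every nonzero $q\in Q$ there is an ideal $J$ of $L$ with $\mathrm{Ann}_L(J)=\{a\in L:[a,J]=0\}=0$ and $0\ne[J,q]\subseteq L$. *)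

theory Defs
  imports Main "HOL.Modules"
begin

definition lie_algebra :: "('r::comm_ring_1 \<Rightarrow> 'q::ab_group_add \<Rightarrow> 'q) \<Rightarrow> ('q \<Rightarrow> 'q \<Rightarrow> 'q) \<Rightarrow> bool" where
  "lie_algebra sm br \<longleftrightarrow>
     module sm \<and>
     (\<forall>x y z. br (x + y) z = br x z + br y z) \<and>
     (\<forall>x y z. br x (y + z) = br x y + br x z) \<and>
     (\<forall>c x y. br (sm c x) y = sm c (br x y)) \<and>
     (\<forall>c x y. br x (sm c y) = sm c (br x y)) \<and>
     (\<forall>x. br x x = 0) \<and>
     (\<forall>x y z. br x (br y z) + br y (br z x) + br z (br x y) = 0)"

definition lie_subalgebra :: "('r::comm_ring_1 \<Rightarrow> 'q::ab_group_add \<Rightarrow> 'q) \<Rightarrow> ('q \<Rightarrow> 'q \<Rightarrow> 'q) \<Rightarrow> 'q set \<Rightarrow> bool" where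
  "lie_subalgebra sm br L \<longleftrightarrow> 0 \<in> L \<and> (\<forall>x\<in>L. \<forall>y\<in>L. x + y \<in> L) \<and>
     (\<forall>c. \<forall>x\<in>L. sm c x \<in> L) \<and> (\<forall>x\<in>L. \<forall>y\<in>L. br x y \<in> L)"

definition lie_ideal :: "('r::comm_ring_1 \<Rightarrow> 'q::ab_group_add \<Rightarrow> 'q) \<Rightarrow> ('q \<Rightarrow> 'q \<Rightarrow> 'q) \<Rightarrow> 'q set \<Rightarrow> 'q set \<Rightarrow> bool" where
  "lie_ideal sm br L J \<longleftrightarrow> J \<subseteq> L \<and> 0 \<in> J \<and> (\<forall>x\<in>J. \<forall>y\<in>J. x + y \<in> J) \<and>
     (\<forall>c. \<forall>x\<in>J. sm c x \<in> J) \<and> (\<forall>j\<in>J. \<forall>x\<in>L. br j x \<in> J)"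

definition lie_ann :: "('q::ab_group_add \<Rightarrow> 'q \<Rightarrow> 'q) \<Rightarrow> 'q set \<Rightarrow> 'q set \<Rightarrow> 'q set" where
  "lie_ann br L J = {a \<in> L. \<forall>j\<in>J. br a j = 0}"

definition lie_center :: "('q::ab_group_add \<Rightarrow> 'q \<Rightarrow> 'q) \<Rightarrow> 'q set" where
  "lie_center br = {a. \<forall>y. br a y = 0}"

text \<open>A(Q): associative Phi-subalgebra of End(Q) generated by the ad_x (ad_x = br x).\<close>
inductive_set A_alg :: "('r::comm_ring_1 \<Rightarrow> 'q::ab_group_add \<Rightarrow> 'q) \<Rightarrow> ('q \<Rightarrow> 'q \<Rightarrow> 'q) \<Rightarrow> ('q \<Rightarrow> 'q) set"
  for sm br where
  ad: "br x \<in> A_alg sm br"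
| add: "f \<in> A_alg sm br \<Longrightarrow> g \<in> A_alg sm br \<Longrightarrow> (\<lambda>y. f y + g y) \<in> A_alg sm br"
| smul: "f \<in> A_alg sm br \<Longrightarrow> (\<lambda>y. sm c (f y)) \<in> A_alg sm br"
| comp: "f \<in> A_alg sm br \<Longrightarrow> g \<in> A_alg sm br \<Longrightarrow> f \<circ> g \<in> A_alg sm br"

inductive_set M_alg :: "('r::comm_ring_1 \<Rightarrow> 'q::ab_group_add \<Rightarrow> 'q) \<Rightarrow> ('q \<Rightarrow> 'q \<Rightarrow> 'q) \<Rightarrow> ('q \<Rightarrow> 'q) set"
  for sm br where
  ident: "id \<in> M_alg sm br"
| ad: "br x \<in> M_alg sm br"
| add: "f \<in> M_alg sm br \<Longrightarrow> g \<in> M_alg sm br \<Longrightarrow> (\<lambda>y. f y + g y) \<in> M_alg sm br"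
| smul: "f \<in> M_alg sm br \<Longrightarrow> (\<lambda>y. sm c (f y)) \<in> M_alg sm br"
| comp: "f \<in> M_alg sm br \<Longrightarrow> g \<in> M_alg sm br \<Longrightarrow> f \<circ> g \<in> M_alg sm br"

definition A0_alg :: "('r::comm_ring_1 \<Rightarrow> 'q::ab_group_add \<Rightarrow> 'q) \<Rightarrow> ('q \<Rightarrow> 'q \<Rightarrow> 'q) \<Rightarrow> 'q set \<Rightarrow> ('q \<Rightarrow> 'q) set" where
  "A0_alg sm br L = {\<mu> \<in> A_alg sm br. \<mu> ` L \<subseteq> L}"

definition dense_ext :: "('r::comm_ring_1 \<Rightarrow> 'q::ab_group_add \<Rightarrow> 'q) \<Rightarrow> ('q \<Rightarrow> 'q \<Rightarrow> 'q) \<Rightarrow> 'q set \<Rightarrow> bool" where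
  "dense_ext sm br L \<longleftrightarrow> (\<forall>\<mu> \<in> M_alg sm br. (\<forall>x\<in>L. \<mu> x = 0) \<longrightarrow> \<mu> = (\<lambda>_. 0))"

definition assoc_ideal :: "('r::comm_ring_1 \<Rightarrow> 'q::ab_group_add \<Rightarrow> 'q) \<Rightarrow> ('q \<Rightarrow> 'q) set \<Rightarrow> ('q \<Rightarrow> 'q) set \<Rightarrow> bool" where
  "assoc_ideal sm A I \<longleftrightarrow> I \<subseteq> A \<and> (\<lambda>_. 0) \<in> I \<and>
     (\<forall>f\<in>I. \<forall>g\<in>I. (\<lambda>y. f y + g y) \<in> I) \<and> (\<forall>c. \<forall>f\<in>I. (\<lambda>y. sm c (f y)) \<in> I) \<and>
     (\<forall>a\<in>A. \<forall>f\<in>I. a \<circ> f \<in> I \<and> f \<circ> a \<in> I)"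

definition left_ann :: "('q::ab_group_add \<Rightarrow> 'q) set \<Rightarrow> ('q \<Rightarrow> 'q) set \<Rightarrow> ('q \<Rightarrow> 'q) set" where
  "left_ann A I = {a \<in> A. \<forall>f\<in>I. a \<circ> f = (\<lambda>_. 0)}"

text \<open>S is right ideally absorbed into A (A \<subseteq> S).\<close>
definition right_ideally_absorbed :: "('r::comm_ring_1 \<Rightarrow> 'q::ab_group_add \<Rightarrow> 'q) \<Rightarrow> ('q \<Rightarrow> 'q) set \<Rightarrow> ('q \<Rightarrow> 'q) set \<Rightarrow> bool" where
  "right_ideally_absorbed sm S A \<longleftrightarrow>
     (\<forall>q\<in>S. q \<noteq> (\<lambda>_. 0) \<longrightarrow> (\<exists>I. assoc_ideal sm A I \<and> left_ann A I = {\<lambda>_. 0} \<and>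
         (\<lambda>f. q \<circ> f) ` I \<noteq> {\<lambda>_. 0} \<and> (\<lambda>f. q \<circ> f) ` I \<subseteq> A))"

text \<open>Q (the whole carrier type) is an algebra of quotients of L.\<close>
definition algebra_of_quotients :: "('r::comm_ring_1 \<Rightarrow> 'q::ab_group_add \<Rightarrow> 'q) \<Rightarrow> ('q \<Rightarrow> 'q \<Rightarrow> 'q) \<Rightarrow> 'q set \<Rightarrow> bool" where
  "algebra_of_quotients sm br L \<longleftrightarrow>
     (\<forall>q. q \<noteq> 0 \<longrightarrow> (\<exists>J. lie_ideal sm br L J \<and> lie_ann br L J = {0} \<and>
         (\<lambda>j. br j q) ` J \<noteq> {0} \<and> (\<lambda>j. br j q) ` J \<subseteq> L))"

end

theory Submission
  imports Defs
begin

inductive_set genJ :: "('q::ab_group_add \<Rightarrow> 'q) set \<Rightarrow> 'q set \<Rightarrow> 'q set" for I L where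
  z: "0 \<in> genJ I L"
| g: "\<mu> \<in> I \<Longrightarrow> x \<in> L \<Longrightarrow> \<mu> x \<in> genJ I L"
| s: "a \<in> genJ I L \<Longrightarrow> b \<in> genJ I L \<Longrightarrow> a + b \<in> genJ I L"

lemma A_sub_M: "f \<in> A_alg sm br \<Longrightarrow> f \<in> M_alg sm br"
proof (induction rule: A_alg.induct)
  case (comp f g) then show ?case using M_alg.comp by blast
qed (auto intro: M_alg.intros)

lemma br_0l: assumes "lie_algebra sm br" shows "br 0 y = 0"
proof -
  have "br (0+0) y = br 0 y + br 0 y" using assms unfolding lie_algebra_def by blast
  then show ?thesis by simp
qed

lemma br_anti: assumes "lie_algebra sm br" shows "br x y = - br y x"
proof -
  have A: "\<forall>x y z. br (x + y) z = br x z + br y z" "\<forall>x y z. br x (y + z) = br x y + br x z"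
    "\<forall>x. br x x = 0" using assms unfolding lie_algebra_def by blast+
  have h1: "br (x+y) (x+y) = br x (x+y) + br y (x+y)" using A(1) by blast
  have h2: "br x (x+y) = br x x + br x y" "br y (x+y) = br y x + br y y" using A(2) by blast+
  have "br x y + br y x = 0" using h1 h2 A(3) by (metis add_0 add_0_right)
  then show ?thesis by (simp add: eq_neg_iff_add_eq_0)
qed

lemma sm_neg: assumes "lie_algebra sm br" shows "sm (-1) x = - x"
proof -
  have "module sm" using assms unfolding lie_algebra_def by blast
  then show ?thesis by (simp add: module.scale_minus_left module.scale_one)
qed

theorem mainTheorem20:
  fixes sm :: "'r::comm_ring_1 \<Rightarrow> 'q::ab_group_add \<Rightarrow> 'q"
    and br :: "'q \<Rightarrow> 'q \<Rightarrow> 'q"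
    and L :: "'q set"
  assumes "lie_algebra sm br"
    and "lie_subalgebra sm br L"
    and "dense_ext sm br L"
    and "lie_center br = {0}"
    and "right_ideally_absorbed sm (A_alg sm br) (A0_alg sm br L)"
  shows "algebra_of_quotients sm br L"
  unfolding algebra_of_quotients_def
proof (intro allI impI)
  fix q :: 'q assume q0: "q \<noteq> 0"
  have LA: "module sm" "\<forall>x y z. br (x + y) z = br x z + br y z"
    "\<forall>c x y. br (sm c x) y = sm c (br x y)"
    using assms(1) unfolding lie_algebra_def by blast+
  have LS: "0 \<in> L" "\<forall>x\<in>L. \<forall>y\<in>L. x + y \<in> L" "\<forall>c. \<forall>x\<in>L. sm c x \<in> L" "\<forall>x\<in>L. \<forall>y\<in>L. br x y \<in> L"
    using assms(2) unfolding lie_subalgebra_def by blast+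
  have negL: "- x \<in> L" if "x \<in> L" for x
    using LS(3) that sm_neg[OF assms(1)] by metis
  have dense: "\<mu> = (\<lambda>_. 0)" if "\<mu> \<in> A_alg sm br" "\<forall>x\<in>L. \<mu> x = 0" for \<mu>
    using assms(3) A_sub_M[OF that(1)] that(2) unfolding dense_ext_def by blast
  have adq: "br q \<noteq> (\<lambda>_. 0)"
  proof
    assume "br q = (\<lambda>_. 0)"
    then have "q \<in> lie_center br" unfolding lie_center_def by simp
    with assms(4) q0 show False by simp
  qed
  have adA: "br x \<in> A0_alg sm br L" if "x \<in> L" for x
    unfolding A0_alg_def using A_alg.ad LS(4) that by auto
  obtain I where I: "assoc_ideal sm (A0_alg sm br L) I" "left_ann (A0_alg sm br L) I = {\<lambda>_. 0}"
    "(\<lambda>f. br q \<circ> f) ` I \<noteq> {\<lambda>_. 0}" "(\<lambda>f. br q \<circ> f) ` I \<subseteq> A0_alg sm br L"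
  proof -
    have "\<forall>q\<in>A_alg sm br. q \<noteq> (\<lambda>_. 0) \<longrightarrow> (\<exists>I. assoc_ideal sm (A0_alg sm br L) I \<and> left_ann (A0_alg sm br L) I = {\<lambda>_. 0} \<and>
         (\<lambda>f. q \<circ> f) ` I \<noteq> {\<lambda>_. 0} \<and> (\<lambda>f. q \<circ> f) ` I \<subseteq> A0_alg sm br L)"
      using assms(5) unfolding right_ideally_absorbed_def .
    then have "\<exists>I. assoc_ideal sm (A0_alg sm br L) I \<and> left_ann (A0_alg sm br L) I = {\<lambda>_. 0} \<and>
         (\<lambda>f. br q \<circ> f) ` I \<noteq> {\<lambda>_. 0} \<and> (\<lambda>f. br q \<circ> f) ` I \<subseteq> A0_alg sm br L"
      using adq A_alg.ad by blast
    then show ?thesis using that by blast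
  qed
  have IA: "I \<subseteq> A0_alg sm br L" "(\<lambda>_. 0) \<in> I" "\<forall>c. \<forall>f\<in>I. (\<lambda>y. sm c (f y)) \<in> I"
    "\<forall>a\<in>A0_alg sm br L. \<forall>f\<in>I. a \<circ> f \<in> I"
    using I(1) unfolding assoc_ideal_def by blast+
  have muL: "\<mu> x \<in> L" if "\<mu> \<in> I" "x \<in> L" for \<mu> x
    using IA(1) that unfolding A0_alg_def by blast
  have muA: "\<mu> \<in> A_alg sm br" if "\<mu> \<in> I" for \<mu>
    using IA(1) that unfolding A0_alg_def by blast
  define J where "J = genJ I L"
  have JL: "J \<subseteq> L"
  proof
    fix z assume "z \<in> J" then show "z \<in> L" unfolding J_def
      by (induction rule: genJ.induct) (auto simp: LS muL)
  qed
  have Jsm: "sm c z \<in> J" if "z \<in> J" for c z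
    using that unfolding J_def
  proof (induction rule: genJ.induct)
    case z then show ?case using LA(1) by (simp add: module.scale_zero_right genJ.z)
  next
    case (g \<mu> x) then show ?case using IA(3) genJ.g[of "\<lambda>y. sm c (\<mu> y)" I x L] by blast
  next
    case (s a b) then show ?case using LA(1) by (simp add: module.scale_right_distrib genJ.s)
  qed
  have Jbr: "br z x \<in> J" if "z \<in> J" "x \<in> L" for z x
    using that(1) unfolding J_def
  proof (induction rule: genJ.induct)
    case z then show ?case by (simp add: br_0l[OF assms(1)] genJ.z)
  next
    case (g \<mu> y)
    have "br x \<circ> \<mu> \<in> I" using IA(4) adA[OF that(2)] g by blast
    then have mI: "(\<lambda>w. sm (-1) ((br x \<circ> \<mu>) w)) \<in> I" using IA(3) by blast
    then have "(\<lambda>w. sm (-1) ((br x \<circ> \<mu>) w)) y \<in> genJ I L" using genJ.g[OF mI g(2)] by blast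
    then show ?case by (simp add: sm_neg[OF assms(1)] br_anti[OF assms(1), of x])
  next
    case (s a b) then show ?case using LA(2) by (simp add: genJ.s)
  qed
  have ideal: "lie_ideal sm br L J"
    unfolding lie_ideal_def using JL Jsm Jbr
    by (auto simp: J_def intro: genJ.z genJ.s)
  have brq: "br z q \<in> L" if "z \<in> J" for z
    using that unfolding J_def
  proof (induction rule: genJ.induct)
    case z then show ?case by (simp add: br_0l[OF assms(1)] LS)
  next
    case (g \<mu> y)
    have "br q \<circ> \<mu> \<in> A0_alg sm br L" using I(4) g by blast
    then have "br q (\<mu> y) \<in> L" using g unfolding A0_alg_def by auto
    then show ?case using negL br_anti[OF assms(1), of "\<mu> y" q] by simp
  next
    case (s a b) then show ?case using LA(2) LS by simp
  qed
  have nz: "(\<lambda>j. br j q) ` J \<noteq> {0}"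
  proof
    assume H: "(\<lambda>j. br j q) ` J = {0}"
    obtain \<mu> where mu: "\<mu> \<in> I" "br q \<circ> \<mu> \<noteq> (\<lambda>_. 0)"
    proof -
      have "\<exists>\<mu>\<in>I. br q \<circ> \<mu> \<noteq> (\<lambda>_. 0)"
      proof (rule ccontr)
        assume "\<not> ?thesis"
        then have "(\<lambda>f. br q \<circ> f) ` I = {\<lambda>_. 0}" using IA(2) by (auto simp del: fun_eq_iff)
        then show False using I(3) by blast
      qed
      then show ?thesis using that by blast
    qed
    have "br q \<circ> \<mu> \<in> A_alg sm br" using I(4) mu(1) unfolding A0_alg_def by blast
    moreover have "\<forall>x\<in>L. (br q \<circ> \<mu>) x = 0"
    proof
      fix x assume "x \<in> L"
      then have "\<mu> x \<in> J" unfolding J_def using mu(1) by (blast intro: genJ.g)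
      then have "br (\<mu> x) q = 0" using H by blast
      then show "(br q \<circ> \<mu>) x = 0" using br_anti[OF assms(1), of q "\<mu> x"] by simp
    qed
    ultimately show False using dense mu(2) by blast
  qed
  have ann: "lie_ann br L J = {0}"
  proof
    show "{0} \<subseteq> lie_ann br L J" unfolding lie_ann_def using LS(1) br_0l[OF assms(1)] by auto
  next
    show "lie_ann br L J \<subseteq> {0}"
    proof
      fix a assume "a \<in> lie_ann br L J"
      then have a: "a \<in> L" "\<forall>j\<in>J. br a j = 0" unfolding lie_ann_def by auto
      have "\<forall>f\<in>I. br a \<circ> f = (\<lambda>_. 0)"
      proof
        fix f assume f: "f \<in> I"
        have "br a \<circ> f \<in> A_alg sm br" using A_alg.comp[OF A_alg.ad muA[OF f]] .
        moreover have "\<forall>x\<in>L. (br a \<circ> f) x = 0"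
          using a(2) f unfolding J_def by (auto intro: genJ.g)
        ultimately show "br a \<circ> f = (\<lambda>_. 0)" using dense by blast
      qed
      then have "br a \<in> left_ann (A0_alg sm br L) I" unfolding left_ann_def using adA[OF a(1)] by blast
      then have "br a = (\<lambda>_. 0)" using I(2) by blast
      then have "a \<in> lie_center br" unfolding lie_center_def by simp
      then show "a \<in> {0}" using assms(4) by simp
    qed
  qed
  show "\<exists>J. lie_ideal sm br L J \<and> lie_ann br L J = {0} \<and>
         (\<lambda>j. br j q) ` J \<noteq> {0} \<and> (\<lambda>j. br j q) ` J \<subseteq> L"
    using ideal ann nz brq by blast
qed

end
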